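(* In the setting below, suppose Slater's condition $\sum_{j=1}^J\gamma_j\epsilon_j<C$ holds, and let $\mathcal{B}\subseteq\{1,\dots,J\}$ contain exactly $J-1$ indices, the remaining one being $j''$. Then under the allocation $\mathbf{R}^\ast(\mathcal{B})$ the variance constraint of portfolio $j''$ is satisfied, i.e. $\sigma^2_{\mathcal{D},j''}/r_{j''}+\sum_{i\in\mathcal{I}_{j''}}\sigma_i^2/R_i<V_{j''}$.
   Context: There are $J$ portfolios; portfolio $j$ has independent accounts $\mathcal{I}_j$ with standard deviations $\sigma_i>0$ and a dependent block $\mathcal{D}_j$ of $|\mathcal{D}_j|$ accounts whose total has standard deviation $\sigma_{\mathcal{D},j}\ge0$ ($\sigma_{\mathcal{D},j}\sqrt{|\mathcal{D}_j|}=0$ if $\mathcal{D}_j=\emptyset$). Budget $C>0$, variance bounds $V_j>0$. Let $\gamma_j=\sigma_{\mathcal{D},j}\sqrt{|\mathcal{D}_j|}+\sum_{i\in\mathcal{I}_j}\sigma_i>0$, $\epsilon_j=\gamma_j/V_j$, $\alpha(\mathcal{B})=\big(C-\sum_{j\in\mathcal{B}}\gamma_j\epsilon_j\big)/\sum_{j\notin\mathcal{B}}\gamma_j$, and $e_j(\mathcal{B})=\epsilon_j$ for $j\in\mathcal{B}$, $e_j(\mathcal{B})=\alpha(\mathcal{B})$ for $j\notin\mathcal{B}$. The allocation $\mathbf{R}^\ast(\mathcal{B})$ sets $R_i=\sigma_ie_j(\mathcal{B})$ for $i\in\mathcal{I}_j$ and the common realisation number $r_j=\frac{\sigma_{\mathcal{D},j}}{\sqrt{|\mathcal{D}_j|}}e_j(\mathcal{B})$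 for accounts of $\mathcal{D}_j$; it solves the stationarity equations of the Lagrangian of the problem of minimising $\sum_j(\sigma^2_{\mathcal{D},j}/r_j+\sum_{i\in\mathcal{I}_j}\sigma_i^2/R_i)$ over positive reals subject to $\sum_jr_j|\mathcal{D}_j|+\sum_iR_i=C$ and $\sigma^2_{\mathcal{D},j}/r_j+\sum_{i\in\mathcal{I}_j}\sigma_i^2/R_i\le V_j$, with the constraints in $\mathcal{B}$ active. Terms involving $r_j$ are absent when $\mathcal{D}_j=\emptyset$. *)

theory Defs
  imports Complex_Main
begin

text \<open>Portfolios are indexed by 1..J. Portfolio j has independent accounts Ind j
(standard deviations sig i) and a dependent block Dep j whose total has standard
deviation sigD j.\<close>

definition gam :: "(nat \<Rightarrow> 'a set) \<Rightarrow> (nat \<Rightarrow> 'a set) \<Rightarrow> ('a \<Rightarrow> real) \<Rightarrow> (nat \<Rightarrow> real) \<Rightarrow> nat \<Rightarrow> real" where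
  "gam Ind Dep sig sigD j = sigD j * sqrt (real (card (Dep j))) + (\<Sum>i\<in>Ind j. sig i)"

definition eps :: "(nat \<Rightarrow> 'a set) \<Rightarrow> (nat \<Rightarrow> 'a set) \<Rightarrow> ('a \<Rightarrow> real) \<Rightarrow> (nat \<Rightarrow> real) \<Rightarrow> (nat \<Rightarrow> real) \<Rightarrow> nat \<Rightarrow> real" where
  "eps Ind Dep sig sigD V j = gam Ind Dep sig sigD j / V j"

definition alpha :: "nat \<Rightarrow> (nat \<Rightarrow> 'a set) \<Rightarrow> (nat \<Rightarrow> 'a set) \<Rightarrow> ('a \<Rightarrow> real) \<Rightarrow> (nat \<Rightarrow> real) \<Rightarrow> (nat \<Rightarrow> real) \<Rightarrow> real \<Rightarrow> nat set \<Rightarrow> real" where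
  "alpha J Ind Dep sig sigD V C B =
     (C - (\<Sum>j\<in>B. gam Ind Dep sig sigD j * eps Ind Dep sig sigD V j))
     / (\<Sum>j\<in>{1..J} - B. gam Ind Dep sig sigD j)"

definition eB :: "nat \<Rightarrow> (nat \<Rightarrow> 'a set) \<Rightarrow> (nat \<Rightarrow> 'a set) \<Rightarrow> ('a \<Rightarrow> real) \<Rightarrow> (nat \<Rightarrow> real) \<Rightarrow> (nat \<Rightarrow> real) \<Rightarrow> real \<Rightarrow> nat set \<Rightarrow> nat \<Rightarrow> real" where
  "eB J Ind Dep sig sigD V C B j =
     (if j \<in> B then eps Ind Dep sig sigD V j else alpha J Ind Dep sig sigD V C B)"

text \<open>Allocation R^*(B): R_i for an independent account i of portfolio j, and the common
realisation number r_j of the dependent block of portfolio j.\<close>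

definition Rstar :: "nat \<Rightarrow> (nat \<Rightarrow> 'a set) \<Rightarrow> (nat \<Rightarrow> 'a set) \<Rightarrow> ('a \<Rightarrow> real) \<Rightarrow> (nat \<Rightarrow> real) \<Rightarrow> (nat \<Rightarrow> real) \<Rightarrow> real \<Rightarrow> nat set \<Rightarrow> nat \<Rightarrow> 'a \<Rightarrow> real" where
  "Rstar J Ind Dep sig sigD V C B j i = sig i * eB J Ind Dep sig sigD V C B j"

definition rstar :: "nat \<Rightarrow> (nat \<Rightarrow> 'a set) \<Rightarrow> (nat \<Rightarrow> 'a set) \<Rightarrow> ('a \<Rightarrow> real) \<Rightarrow> (nat \<Rightarrow> real) \<Rightarrow> (nat \<Rightarrow> real) \<Rightarrow> real \<Rightarrow> nat set \<Rightarrow> nat \<Rightarrow> real" where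
  "rstar J Ind Dep sig sigD V C B j =
     sigD j / sqrt (real (card (Dep j))) * eB J Ind Dep sig sigD V C B j"

definition variance_at :: "nat \<Rightarrow> (nat \<Rightarrow> 'a set) \<Rightarrow> (nat \<Rightarrow> 'a set) \<Rightarrow> ('a \<Rightarrow> real) \<Rightarrow> (nat \<Rightarrow> real) \<Rightarrow> (nat \<Rightarrow> real) \<Rightarrow> real \<Rightarrow> nat set \<Rightarrow> nat \<Rightarrow> real" where
  "variance_at J Ind Dep sig sigD V C B j =
     (if Dep j = {} then 0 else (sigD j)\<^sup>2 / rstar J Ind Dep sig sigD V C B j)
     + (\<Sum>i\<in>Ind j. (sig i)\<^sup>2 / Rstar J Ind Dep sig sigD V C B j i)"

end

theory Submission
  imports Defs
begin

theorem lemma7: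
  fixes J :: nat and Ind Dep :: "nat \<Rightarrow> 'a set" and sig :: "'a \<Rightarrow> real"
    and sigD V :: "nat \<Rightarrow> real" and C :: real and B :: "nat set" and j'' :: nat
  assumes fin_Ind: "\<forall>j\<in>{1..J}. finite (Ind j)"
    and fin_Dep: "\<forall>j\<in>{1..J}. finite (Dep j)"
    and sig_pos: "\<forall>j\<in>{1..J}. \<forall>i\<in>Ind j. sig i > 0"
    and sigD_nonneg: "\<forall>j\<in>{1..J}. sigD j \<ge> 0"
    and gam_pos: "\<forall>j\<in>{1..J}. gam Ind Dep sig sigD j > 0"
    and C_pos: "C > 0"
    and V_pos: "\<forall>j\<in>{1..J}. V j > 0"
    and slater: "(\<Sum>j\<in>{1..J}. gam Ind Dep sig sigD j * eps Ind Dep sig sigD V j) < C"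
    and jpp: "j'' \<in> {1..J}"
    and B_def: "B = {1..J} - {j''}"
  shows "variance_at J Ind Dep sig sigD V C B j'' < V j''"
proof -
  let ?g = "gam Ind Dep sig sigD j''"
  let ?a = "alpha J Ind Dep sig sigD V C B"
  have gp: "?g > 0" and Vp: "V j'' > 0" using gam_pos V_pos jpp by auto
  have fI: "finite (Ind j'')" and fD: "finite (Dep j'')" and sD: "sigD j'' \<ge> 0"
    using fin_Ind fin_Dep sigD_nonneg jpp by auto
  have spos: "\<forall>i\<in>Ind j''. sig i > 0" using sig_pos jpp by auto
  have jB: "j'' \<notin> B" using B_def by auto
  have diff: "{1..J} - B = {j''}" using B_def jpp by auto
  have split: "(\<Sum>j\<in>{1..J}. gam Ind Dep sig sigD j * eps Ind Dep sig sigD V j)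
     = ?g * eps Ind Dep sig sigD V j'' + (\<Sum>j\<in>B. gam Ind Dep sig sigD j * eps Ind Dep sig sigD V j)"
    unfolding B_def using jpp by (simp add: sum.remove)
  have aeq: "?a * ?g = C - (\<Sum>j\<in>B. gam Ind Dep sig sigD j * eps Ind Dep sig sigD V j)"
    unfolding alpha_def diff using gp by simp
  have "?a * ?g > ?g * (?g / V j'')" using aeq split slater unfolding eps_def by linarith
  hence "?g * (?g / V j'') < ?g * ?a" by (simp add: mult.commute)
  hence agt: "?a > ?g / V j''" using gp mult_less_cancel_left_pos by blast
  have apos: "?a > 0" using agt gp Vp by (smt (verit) divide_pos_pos)
  have eBe: "eB J Ind Dep sig sigD V C B j'' = ?a" using jB by (simp add: eB_def)
  have t1: "(if Dep j'' = {} then 0 else (sigD j'')\<^sup>2 / rstar J Ind Dep sig sigD V C B j'')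
      = sigD j'' * sqrt (real (card (Dep j''))) / ?a"
  proof (cases "Dep j'' = {}")
    case True then show ?thesis by simp
  next
    case False
    hence cp: "card (Dep j'') > 0" using fD by (simp add: card_gt_0_iff)
    hence "sqrt (real (card (Dep j''))) > 0" by simp
    then show ?thesis using False apos unfolding rstar_def eBe
      by (cases "sigD j'' = 0") (simp_all add: power2_eq_square field_simps)
  qed
  have t2: "(\<Sum>i\<in>Ind j''. (sig i)\<^sup>2 / Rstar J Ind Dep sig sigD V C B j'' i)
      = (\<Sum>i\<in>Ind j''. sig i) / ?a"
    unfolding sum_divide_distrib
  proof (rule sum.cong)
    fix i assume "i \<in> Ind j''"
    hence "sig i > 0" using spos by auto
    then show "(sig i)\<^sup>2 / Rstar J Ind Dep sig sigD V C B j'' i = sig i / ?a"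
      unfolding Rstar_def eBe using apos by (simp add: power2_eq_square field_simps)
  qed simp
  have "variance_at J Ind Dep sig sigD V C B j'' = ?g / ?a"
    unfolding variance_at_def t1 t2 gam_def by (simp add: add_divide_distrib)
  also have "\<dots> < V j''" using agt apos Vp gp by (simp add: field_simps)
  finally show ?thesis .
qed

end
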